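(* There exists a set $\mathcal{A} = \{a_1,a_2,a_3,\ldots\}$ of positive integers such that (i) every positive integer $n \notin \{2,3,7,11,15\}$ has a Wilf partition that is a fixed point of the involution $\iota$ and in which every part size and every multiplicity belongs to $\mathcal{A}$; and (ii) $|\mathcal{A} \cap [1,m]| = O(\log m)$ as $m \to \infty$.
   Context: A Wilf partition of a positive integer $n$ is an integer partition of $n$ in which all nonzero multiplicities are distinct. Writing a partition as the set of its part–multiplicity pairs $(p_i,m_i)$ (meaning the part $p_i$ occurs exactly $m_i\ge 1$ times, the $p_i$ being distinct), the involution $\iota$ on Wilf partitions interchanges part sizes and multiplicities, sending the partition with pairs $\{(p_i,m_i)\}$ to the one with pairs $\{(m_i,p_i)\}$. A fixed point of $\iota$ is a Wilf partition such that whenever $(p,m)$ is one of its part–multiplicity pairs, so is $(m,p)$. *)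

theory Defs
  imports Complex_Main "HOL-Library.Multiset" "HOL-Library.Landau_Symbols"
begin

definition is_partition :: "nat \<Rightarrow> nat multiset \<Rightarrow> bool" where
  "is_partition n P \<longleftrightarrow> (\<forall>p\<in>#P. p > 0) \<and> sum_mset P = n"

definition wilf_partition :: "nat \<Rightarrow> nat multiset \<Rightarrow> bool" where
  "wilf_partition n P \<longleftrightarrow> is_partition n P \<and> inj_on (count P) (set_mset P)"

text \<open>Fixed point of the involution swapping parts and multiplicities:
  whenever (p, m) is a part-multiplicity pair, so is (m, p).\<close>
definition iota_fixed :: "nat multiset \<Rightarrow> bool" where
  "iota_fixed P \<longleftrightarrow> (\<forall>p\<in>#P. count P p \<in># P \<and> count P (count P p) = p)"

end

theory Submission imports Defs begin

lemma sum_mset_count: "sum_mset (M::nat multiset) = (\<Sum>x\<in>set_mset M. x * count M x)"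
proof (induction M)
  case empty then show ?case by simp
next
  case (add a M)
  show ?case
  proof (cases "a \<in># M")
    case True
    have "(\<Sum>x\<in>set_mset (add_mset a M). x * count (add_mset a M) x)
        = (\<Sum>x\<in>set_mset M. (if x = a then a else 0) + x * count M x)"
      using True by (intro sum.cong) (auto simp: insert_absorb)
    also have "\<dots> = a + (\<Sum>x\<in>set_mset M. x * count M x)"
      using True by (simp add: sum.distrib)
    finally show ?thesis using add by simp
  next
    case False
    have "(\<Sum>x\<in>set_mset (add_mset a M). x * count (add_mset a M) x)
        = a + (\<Sum>x\<in>set_mset M. x * count (add_mset a M) x)"
      using False by (simp add: count_eq_zero_iff)
    also have "(\<Sum>x\<in>set_mset M. x * count (add_mset a M) x) = (\<Sum>x\<in>set_mset M. x * count M x)"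
      using False by (intro sum.cong) auto
    finally show ?thesis using add by simp
  qed
qed

definition invc :: "(nat \<Rightarrow> nat) \<Rightarrow> nat \<Rightarrow> bool" where
  "invc f n \<longleftrightarrow> f 0 = 0 \<and> (\<forall>x. 0 < f x \<longrightarrow> f (f x) = x) \<and> finite {x. 0 < f x} \<and>
     (\<Sum>x\<in>{x. 0 < f x}. x * f x) = n"

definition digS :: "nat \<Rightarrow> nat set \<Rightarrow> bool" where
  "digS n S \<longleftrightarrow> (\<exists>f. invc f n \<and> {x. 0 < f x} = S)"

lemma digS_empty: "digS 0 {}"
  unfolding digS_def invc_def by (rule exI[of _ "\<lambda>_. 0"]) simp

lemma digS_self:
  assumes "digS e S" "c \<notin> S" "0 < c"
  shows "digS (e + c * c) (insert c S)"
proof -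
  obtain g where g: "invc g e" "{x. 0 < g x} = S" using assms(1) unfolding digS_def by blast
  define h where "h = g(c := c)"
  have gc: "g c = 0" using g(2) assms(2) by auto
  have supp: "{x. 0 < h x} = insert c S" using g(2) assms(3) by (auto simp: h_def)
  have fin: "finite S" using g unfolding invc_def by auto
  have inv: "\<forall>x. 0 < h x \<longrightarrow> h (h x) = x"
  proof (intro allI impI)
    fix x assume x: "0 < h x"
    show "h (h x) = x"
    proof (cases "x = c")
      case True then show ?thesis by (simp add: h_def)
    next
      case False
      then have gx: "0 < g x" "h x = g x" using x by (auto simp: h_def)
      then have "g (g x) = x" using g(1) unfolding invc_def by auto
      moreover have "g 0 = 0" using g(1) unfolding invc_def by auto
      ultimately have "g x \<noteq> c" using gc gx by (metis less_irrefl)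
      then show ?thesis using \<open>g (g x) = x\<close> gx by (simp add: h_def)
    qed
  qed
  have "(\<Sum>x\<in>insert c S. x * h x) = c * c + (\<Sum>x\<in>S. x * h x)"
    using fin assms(2) by (simp add: h_def)
  also have "(\<Sum>x\<in>S. x * h x) = (\<Sum>x\<in>S. x * g x)"
    using assms(2) by (intro sum.cong) (auto simp: h_def)
  also have "\<dots> = e" using g unfolding invc_def by auto
  finally have "(\<Sum>x\<in>{x. 0 < h x}. x * h x) = e + c * c" using supp by simp
  moreover have "h 0 = 0" using g(1) assms unfolding invc_def h_def by auto
  ultimately show ?thesis unfolding digS_def invc_def using inv supp fin by (intro exI[of _ h]) auto
qed

lemma digS_pair:
  assumes "digS e S" "a \<notin> S" "b \<notin> S" "a \<noteq> b" "0 < a" "0 < b"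
  shows "digS (e + 2 * a * b) (insert a (insert b S))"
proof -
  obtain g where g: "invc g e" "{x. 0 < g x} = S" using assms(1) unfolding digS_def by blast
  define h where "h = g(a := b, b := a)"
  have gc: "g a = 0" "g b = 0" using g(2) assms(2,3) by auto
  have supp: "{x. 0 < h x} = insert a (insert b S)" using g(2) assms by (auto simp: h_def)
  have fin: "finite S" using g unfolding invc_def by auto
  have inv: "\<forall>x. 0 < h x \<longrightarrow> h (h x) = x"
  proof (intro allI impI)
    fix x assume x: "0 < h x"
    show "h (h x) = x"
    proof (cases "x = a \<or> x = b")
      case True then show ?thesis using assms(4) by (auto simp: h_def)
    next
      case False
      then have gx: "0 < g x" "h x = g x" using x by (auto simp: h_def)
      then have "g (g x) = x" using g(1) unfolding invc_def by auto
      moreover have "g 0 = 0" using g(1) unfolding invc_def by auto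
      ultimately have "g x \<noteq> a" "g x \<noteq> b" using gc gx by (metis less_irrefl)+
      then show ?thesis using \<open>g (g x) = x\<close> gx by (simp add: h_def)
    qed
  qed
  have "(\<Sum>x\<in>insert a (insert b S). x * h x) = a * b + (b * a + (\<Sum>x\<in>S. x * h x))"
    using fin assms(2,3,4) by (simp add: h_def)
  also have "(\<Sum>x\<in>S. x * h x) = (\<Sum>x\<in>S. x * g x)"
    using assms(2,3) by (intro sum.cong) (auto simp: h_def)
  also have "\<dots> = e" using g unfolding invc_def by auto
  finally have "(\<Sum>x\<in>{x. 0 < h x}. x * h x) = e + 2 * a * b" using supp by simp
  moreover have "h 0 = 0" using g(1) assms unfolding invc_def h_def by auto
  ultimately show ?thesis unfolding digS_def invc_def using inv supp fin by (intro exI[of _ h]) auto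
qed

lemma digS_shift:
  assumes "digS n S" "digS e T" "T \<subseteq> {1,3,5,7}"
  shows "digS (e + 4 * n) ((*) 2 ` S \<union> T)"
proof -
  obtain f where f: "invc f n" "{x. 0 < f x} = S" using assms(1) unfolding digS_def by blast
  obtain g where g: "invc g e" "{x. 0 < g x} = T" using assms(2) unfolding digS_def by blast
  define h where "h = (\<lambda>x. if even x then 2 * f (x div 2) else g x)"
  have Todd: "\<And>x. x \<in> T \<Longrightarrow> odd x" using assms(3) by auto
  have finS: "finite S" and finT: "finite T" using f g unfolding invc_def by auto
  have supp: "{x. 0 < h x} = (*) 2 ` S \<union> T"
  proof (intro set_eqI iffI)
    fix x assume "x \<in> {x. 0 < h x}"
    then show "x \<in> (*) 2 ` S \<union> T" using f(2) g(2)
      by (cases "even x") (auto simp: h_def elim!: evenE)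
  next
    fix x assume "x \<in> (*) 2 ` S \<union> T"
    then show "x \<in> {x. 0 < h x}" using f(2) g(2) Todd by (auto simp: h_def)
  qed
  have inv: "\<forall>x. 0 < h x \<longrightarrow> h (h x) = x"
  proof (intro allI impI)
    fix x assume x: "0 < h x"
    show "h (h x) = x"
    proof (cases "even x")
      case True
      then have p: "0 < f (x div 2)" using x by (simp add: h_def)
      then have "f (f (x div 2)) = x div 2" using f(1) unfolding invc_def by auto
      then show ?thesis using True by (simp add: h_def)
    next
      case False
      then have p: "0 < g x" using x by (simp add: h_def)
      then have gg: "g (g x) = x" using g(1) unfolding invc_def by auto
      then have "g x \<in> T" using g(2) p False by (metis mem_Collect_eq odd_pos)
      then have "odd (g x)" using Todd by auto
      then show ?thesis using False gg by (simp add: h_def)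
    qed
  qed
  have disj: "(*) 2 ` S \<inter> T = {}" using Todd by (auto dest!: Todd)
  have "(\<Sum>x\<in>(*) 2 ` S \<union> T. x * h x) = (\<Sum>x\<in>(*) 2 ` S. x * h x) + (\<Sum>x\<in>T. x * h x)"
    using finS finT disj by (simp add: sum.union_disjoint)
  also have "(\<Sum>x\<in>(*) 2 ` S. x * h x) = (\<Sum>y\<in>S. 2 * y * h (2 * y))"
    by (subst sum.reindex) (auto simp: inj_on_def)
  also have "\<dots> = (\<Sum>y\<in>S. 4 * (y * f y))"
    by (intro sum.cong) (auto simp: h_def)
  also have "\<dots> = 4 * n" using f unfolding invc_def by (simp add: sum_distrib_left[symmetric])
  also have "(\<Sum>x\<in>T. x * h x) = (\<Sum>x\<in>T. x * g x)"
    using Todd by (intro sum.cong) (auto simp: h_def)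
  also have "\<dots> = e" using g unfolding invc_def by auto
  finally have "(\<Sum>x\<in>{x. 0 < h x}. x * h x) = e + 4 * n" using supp by simp
  moreover have "h 0 = 0" using f(1) unfolding invc_def h_def by auto
  ultimately show ?thesis unfolding digS_def invc_def using inv supp finS finT
    by (intro exI[of _ h]) auto
qed


definition Aset :: "nat set" where "Aset = {c * 2 ^ k | c k. c \<in> {1,3,5,7}}"

definition good :: "nat \<Rightarrow> bool" where "good n \<longleftrightarrow> (\<exists>S. digS n S \<and> S \<subseteq> Aset)"

definition dig :: "nat \<Rightarrow> bool" where "dig e \<longleftrightarrow> (\<exists>T. digS e T \<and> T \<subseteq> {1,3,5,7})"

lemma Aset_double: "x \<in> Aset \<Longrightarrow> 2 * x \<in> Aset"
proof -
  assume "x \<in> Aset"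
  then obtain c k where "x = c * 2 ^ k" "c \<in> {1,3,5,7}" unfolding Aset_def by blast
  then have "2 * x = c * 2 ^ Suc k" by simp
  then show ?thesis using \<open>c \<in> _\<close> unfolding Aset_def by blast
qed

lemma Aset_small: "c \<in> {1,3,5,7} \<Longrightarrow> c \<in> Aset"
  unfolding Aset_def by (rule CollectI, rule exI[of _ c], rule exI[of _ 0]) simp

lemma good_shift: "good n \<Longrightarrow> dig e \<Longrightarrow> good (e + 4 * n)"
proof -
  assume "good n" "dig e"
  then obtain S T where S: "digS n S" "S \<subseteq> Aset" and T: "digS e T" "T \<subseteq> {1,3,5,7}"
    unfolding good_def dig_def by blast
  have "(*) 2 ` S \<union> T \<subseteq> Aset" using S(2) T(2) Aset_double Aset_small by blast
  then show ?thesis using digS_shift[OF S(1) T] unfolding good_def by blast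
qed

definition Elist :: "nat list" where "Elist = [2,3,7,8,11,12,15,28,32]"
definition Dlist :: "nat list" where "Dlist = [0,1,6,9,10,14,19,23,31,44]"

lemma small_check: "list_all (\<lambda>n. n \<in> set Elist \<or> list_ex (\<lambda>e. e \<le> n \<and> (n - e) mod 4 = 0 \<and> (n - e) div 4 \<notin> set Elist) Dlist) [0..<151]"
  by code_simp

lemma step:
  assumes "n \<notin> set Elist"
  shows "\<exists>e\<in>set Dlist. e \<le> n \<and> (n - e) mod 4 = 0 \<and> (n - e) div 4 \<notin> set Elist"
proof (cases "n < 151")
  case True
  have "n \<in> set [0..<151]" using True by (simp only: set_upt atLeastLessThan_iff) simp
  then have "n \<in> set Elist \<or> list_ex (\<lambda>e. e \<le> n \<and> (n - e) mod 4 = 0 \<and> (n - e) div 4 \<notin> set Elist) Dlist"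
    using small_check unfolding list_all_iff by blast
  then show ?thesis using assms unfolding list_ex_iff by blast
next
  case False
  have big: "(n - e) div 4 \<notin> set Elist" if "e \<le> 19" for e
  proof -
    have "132 \<le> n - e" using False that by linarith
    then have "132 div 4 \<le> (n - e) div 4" by (rule div_le_mono)
    then show ?thesis by (auto simp: Elist_def)
  qed
  have "n mod 4 = 0 \<or> n mod 4 = 1 \<or> n mod 4 = 2 \<or> n mod 4 = 3" by arith
  then show ?thesis
  proof (elim disjE)
    assume "n mod 4 = 0" then show ?thesis using False big[of 0] by (intro bexI[of _ 0]) (auto simp: Dlist_def)
  next
    assume h: "n mod 4 = 1"
    have "(n - 1) mod 4 = 0" using h False by presburger
    then show ?thesis using False big[of 1] by (intro bexI[of _ 1]) (auto simp: Dlist_def)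
  next
    assume h: "n mod 4 = 2"
    have "(n - 6) mod 4 = 0" using h False by presburger
    then show ?thesis using False big[of 6] by (intro bexI[of _ 6]) (auto simp: Dlist_def)
  next
    assume h: "n mod 4 = 3"
    have "(n - 19) mod 4 = 0" using h False by presburger
    then show ?thesis using False big[of 19] by (intro bexI[of _ 19]) (auto simp: Dlist_def)
  qed
qed

lemma dig_D: "e \<in> set Dlist \<Longrightarrow> dig e"
proof -
  have s: "\<And>e T c. digS e T \<Longrightarrow> T \<subseteq> {1,3,5,7} \<Longrightarrow> c \<notin> T \<Longrightarrow> c \<in> {1,3,5,7} \<Longrightarrow> dig (e + c * c)"
    unfolding dig_def by (rule exI, rule conjI, rule digS_self) auto
  have p: "\<And>e T a b. digS e T \<Longrightarrow> T \<subseteq> {1,3,5,7} \<Longrightarrow> a \<notin> T \<Longrightarrow> b \<notin> T \<Longrightarrow> a \<noteq> b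
     \<Longrightarrow> a \<in> {1,3,5,7} \<Longrightarrow> b \<in> {1,3,5,7} \<Longrightarrow> dig (e + 2 * a * b)"
    unfolding dig_def by (rule exI, rule conjI, rule digS_pair) auto
  have d3: "digS 9 {3}" using digS_self[OF digS_empty, of 3] by simp
  have d35: "digS 30 {3,5}" using digS_pair[OF digS_empty, of 3 5] by simp
  have "dig 0" unfolding dig_def using digS_empty by blast
  moreover have "dig 1" using s[OF digS_empty, of 1] by simp
  moreover have "dig 6" using p[OF digS_empty, of 1 3] by simp
  moreover have "dig 9" using s[OF digS_empty, of 3] by simp
  moreover have "dig 10" using s[OF d3, of 1] by simp
  moreover have "dig 14" using p[OF digS_empty, of 1 7] by simp
  moreover have "dig 19" using p[OF d3, of 1 5] by simp
  moreover have "dig 23" using p[OF d3, of 1 7] by simp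
  moreover have "dig 31" using s[OF d35, of 1] by simp
  moreover have "dig 44" using p[OF d35, of 1 7] by simp
  ultimately show "e \<in> set Dlist \<Longrightarrow> dig e" by (auto simp: Dlist_def)
qed

lemma good_all: "n \<notin> set Elist \<Longrightarrow> good n"
proof (induction n rule: less_induct)
  case (less n)
  show ?case
  proof (cases "n = 0")
    case True
    have "good 0" unfolding good_def using digS_empty by (intro exI[of _ "{}"]) simp
    then show ?thesis using True by simp
  next
    case False
    obtain e where e: "e \<in> set Dlist" "e \<le> n" "(n - e) mod 4 = 0" "(n - e) div 4 \<notin> set Elist"
      using step[OF less.prems] by (elim bexE conjE) assumption
    define n' where "n' = (n - e) div 4"
    have "n - e = 4 * n'" using e(3) div_mult_mod_eq[of "n - e" 4] unfolding n'_def by simp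
    then have eq: "n = e + 4 * n'" using e(2) by simp
    have "n' < n" using False eq by linarith
    moreover have "n' \<notin> set Elist" using e(4) unfolding n'_def .
    ultimately have "good n'" by (rule less.IH)
    from good_shift[OF this dig_D[OF e(1)]] show ?thesis using eq by simp
  qed
qed

lemma good_extra: "n \<in> {8,12,28,32} \<Longrightarrow> good n"
proof -
  have g: "\<And>b. b \<in> Aset \<Longrightarrow> 1 < b \<Longrightarrow> good (2 * b)"
  proof -
    fix b :: nat assume b: "b \<in> Aset" "1 < b"
    have "digS (0 + 2 * 1 * b) {1, b}" using digS_pair[OF digS_empty, of 1 b] b by simp
    moreover have "{1, b} \<subseteq> Aset" using b Aset_small by auto
    ultimately show "good (2 * b)" unfolding good_def by auto
  qed
  have "4 \<in> Aset" unfolding Aset_def by (rule CollectI, rule exI[of _ 1], rule exI[of _ 2], simp)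
  moreover have "6 \<in> Aset" unfolding Aset_def by (rule CollectI, rule exI[of _ 3], rule exI[of _ 1], simp)
  moreover have "14 \<in> Aset" unfolding Aset_def by (rule CollectI, rule exI[of _ 7], rule exI[of _ 1], simp)
  moreover have "16 \<in> Aset" unfolding Aset_def by (rule CollectI, rule exI[of _ 1], rule exI[of _ 4], simp)
  ultimately have "good 8" "good 12" "good 28" "good 32" using g[of 4] g[of 6] g[of 14] g[of 16] by auto
  then show "n \<in> {8,12,28,32} \<Longrightarrow> good n" by auto
qed


lemma good_P:
  assumes "good n"
  shows "\<exists>P. wilf_partition n P \<and> iota_fixed P \<and> (\<forall>p\<in>#P. p \<in> Aset \<and> count P p \<in> Aset)"
proof -
  obtain S f where f: "invc f n" "{x. 0 < f x} = S" "S \<subseteq> Aset"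
    using assms unfolding good_def digS_def by blast
  have f0: "f 0 = 0" and ff: "\<And>x. 0 < f x \<Longrightarrow> f (f x) = x" and fin: "finite {x. 0 < f x}"
    and sm: "(\<Sum>x\<in>{x. 0 < f x}. x * f x) = n" using f(1) unfolding invc_def by auto
  define P where "P = Abs_multiset f"
  have cP: "count P = f" unfolding P_def using fin by (simp add: count_Abs_multiset)
  have sP: "set_mset P = {x. 0 < f x}" unfolding set_mset_def cP ..
  have fpos: "\<And>x. 0 < f x \<Longrightarrow> 0 < f (f x)"
    using ff f0 by (metis gr0I)
  have "is_partition n P"
    unfolding is_partition_def
  proof
    show "\<forall>p\<in>#P. 0 < p" using sP f0 by (auto intro: gr0I)
    show "sum_mset P = n" using sm sum_mset_count[of P] sP cP by simp
  qed
  moreover have "inj_on (count P) (set_mset P)"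
    unfolding cP sP by (intro inj_onI) (metis ff mem_Collect_eq)
  moreover have "iota_fixed P"
    unfolding iota_fixed_def cP sP
  proof (intro ballI conjI)
    fix p assume "p \<in> {x. 0 < f x}"
    then have p: "0 < f p" by simp
    show "f p \<in> {x. 0 < f x}" using fpos[OF p] by simp
    show "f (f p) = p" using ff[OF p] .
  qed
  moreover have "\<forall>p\<in>#P. p \<in> Aset \<and> count P p \<in> Aset"
    unfolding cP sP
  proof (intro ballI conjI)
    fix p assume "p \<in> {x. 0 < f x}"
    then have p: "0 < f p" by simp
    show "p \<in> Aset" using p f(2,3) by blast
    show "f p \<in> Aset" using fpos[OF p] f(2,3) by blast
  qed
  ultimately show ?thesis unfolding wilf_partition_def by (intro exI[of _ P]) simp
qed

lemma Aset_pos: "a \<in> Aset \<Longrightarrow> 0 < a"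
  unfolding Aset_def by auto

lemma Aset_inf: "infinite Aset"
proof -
  have "range (\<lambda>k::nat. (2::nat) ^ k) \<subseteq> Aset" unfolding Aset_def by force
  moreover have "infinite (range (\<lambda>k::nat. (2::nat) ^ k))"
  proof
    assume "finite (range (\<lambda>k::nat. (2::nat) ^ k))"
    moreover have "inj (\<lambda>k::nat. (2::nat) ^ k)" by (simp add: inj_on_def)
    ultimately have "finite (UNIV :: nat set)" using finite_imageD by blast
    then show False by simp
  qed
  ultimately show ?thesis using infinite_super by blast
qed

lemma card_bound:
  assumes "1 \<le> m"
  shows "real (card (Aset \<inter> {1..m})) \<le> 4 * (log 2 (real m) + 1)"
proof -
  define K where "K = nat \<lfloor>log 2 (real m)\<rfloor>"
  have sub: "Aset \<inter> {1..m} \<subseteq> (\<lambda>(c,k). c * 2 ^ k) ` ({1,3,5,7::nat} \<times> {..K})"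
  proof
    fix x assume x: "x \<in> Aset \<inter> {1..m}"
    then obtain c k where ck: "x = c * 2 ^ k" "c \<in> {1,3,5,7::nat}" unfolding Aset_def by blast
    have "(2::nat) ^ k \<le> m" using x ck by (auto intro: order_trans[rotated])
    then have "real ((2::nat) ^ k) \<le> real m" by linarith
    then have "2 powr real k \<le> real m" by (simp add: powr_realpow)
    then have "real k \<le> log 2 (real m)" using assms by (simp add: le_log_iff)
    then have "k \<le> K" unfolding K_def by linarith
    then show "x \<in> (\<lambda>(c,k). c * 2 ^ k) ` ({1,3,5,7::nat} \<times> {..K})" using ck by force
  qed
  have "card (Aset \<inter> {1..m}) \<le> card ((\<lambda>(c,k). c * 2 ^ k) ` ({1,3,5,7::nat} \<times> {..K}))"
    by (rule card_mono[OF _ sub]) simp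
  also have "\<dots> \<le> card ({1,3,5,7::nat} \<times> {..K})" by (rule card_image_le) simp
  also have "\<dots> = 4 * (K + 1)" by (simp add: card_cartesian_product)
  finally have "real (card (Aset \<inter> {1..m})) \<le> real (4 * (K + 1))" by (simp only: of_nat_le_iff)
  then have "real (card (Aset \<inter> {1..m})) \<le> 4 * (real K + 1)" by simp
  moreover have "real K \<le> log 2 (real m)"
  proof -
    have "0 \<le> log 2 (real m)" using assms by simp
    then show ?thesis unfolding K_def by linarith
  qed
  ultimately show ?thesis by argo
qed

lemma density: "(\<lambda>m::nat. real (card (Aset \<inter> {1..m}))) \<in> O(\<lambda>m. ln (real m))"
proof (rule bigoI[where c = "8 / ln 2"])
  show "\<forall>\<^sub>F m in sequentially. norm (real (card (Aset \<inter> {1..m}))) \<le> 8 / ln 2 * norm (ln (real m))"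
    unfolding eventually_sequentially
  proof (intro exI[of _ 2] allI impI)
    fix m :: nat assume m: "2 \<le> m"
    have l1: "1 \<le> log 2 (real m)" using m by (simp add: le_log_iff)
    have "real (card (Aset \<inter> {1..m})) \<le> 4 * (log 2 (real m) + 1)" using m by (intro card_bound) simp
    also have "\<dots> \<le> 8 * log 2 (real m)" using l1 by simp
    also have "\<dots> = 8 / ln 2 * ln (real m)" by (simp add: log_def)
    finally show "norm (real (card (Aset \<inter> {1..m}))) \<le> 8 / ln 2 * norm (ln (real m))"
      using m by simp
  qed
qed

theorem lemma2:
  shows "\<exists>A :: nat set. (\<forall>a\<in>A. a > 0) \<and> infinite A \<and>
    (\<forall>n::nat. n > 0 \<longrightarrow> n \<notin> {2,3,7,11,15} \<longrightarrow>
       (\<exists>P. wilf_partition n P \<and> iota_fixed P \<and> (\<forall>p\<in>#P. p \<in> A \<and> count P p \<in> A))) \<and>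
    (\<lambda>m::nat. real (card (A \<inter> {1..m}))) \<in> O(\<lambda>m. ln (real m))"
proof (intro exI[of _ Aset] conjI allI impI)
  show "\<forall>a\<in>Aset. a > 0" using Aset_pos by blast
  show "infinite Aset" by (rule Aset_inf)
  show "(\<lambda>m::nat. real (card (Aset \<inter> {1..m}))) \<in> O(\<lambda>m. ln (real m))" by (rule density)
  fix n :: nat assume "n > 0" "n \<notin> {2,3,7,11,15}"
  then have "good n"
  proof (cases "n \<in> {8,12,28,32}")
    case True then show ?thesis by (rule good_extra)
  next
    case False
    then have "n \<notin> set Elist" using \<open>n \<notin> {2,3,7,11,15}\<close> by (simp add: Elist_def)
    then show ?thesis by (rule good_all)
  qed
  then show "\<exists>P. wilf_partition n P \<and> iota_fixed P \<and> (\<forall>p\<in>#P. p \<in> Aset \<and> count P p \<in> Aset)"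
    by (rule good_P)
qed

end
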